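(* In the setting described in the context, let $(\hat{\boldsymbol\beta},\hat\alpha,\hat{\boldsymbol z},\hat{\boldsymbol l})$ be an optimal solution of the restricted problem (R$_T$), with optimal value $\widehat{\mathsf{Obj}}_{T+1}$. Then (1) $\widehat{\mathsf{Obj}}_{T+1}\le\mathsf{Obj}$; and (2) if $S(\hat{\boldsymbol\beta})=S(\boldsymbol\beta^{(t)})$ for some $t\in[T]$, then $(\hat{\boldsymbol\beta},\hat\alpha,\hat{\boldsymbol z},\hat{\boldsymbol l})$ is also an optimal solution of (MIP$_M$).
   Context: Let $\boldsymbol y\in\mathbb R^n$, $\boldsymbol X\in\mathbb R^{n\times p}$, $\lambda,\lambda_0\ge0$, $M>0$. The columns are partitioned into categorical blocks $\mathcal I_j=\{s_j,\dots,s_j+p_j-1\}$, $j\in[q]$, and possibly further continuous columns. Problem (MIP$_M$): minimise $\frac1n\|\boldsymbol y-\boldsymbol X\boldsymbol\beta-\alpha\mathbf 1\|_2^2+\lambda_0\sum_{i=1}^pz_i+\lambda\sum_{i=1}^pl_i$ over $\boldsymbol\beta\in\mathbb R^p,\alpha\in\mathbb R$, $z_i,l_i\in\{0,1\}$ ($i\in[p]$), $z^j_{i,k}\in\{0,1\}$ ($j\in[q]$, $s_j\le k<i\le s_j+p_j-1$), subject to $|\beta_i|\le Mz_i$ ($i\in[p]$); $|\beta_k-\beta_i|\le2Mz^j_{i,k}$ ($j\in[q]$, $s_j\le k\le i-1$, $s_j\le i\le s_j+p_j-1$); and $\sum_{k=s_j}^{i-1}z^j_{i,k}-(i-s_j-1)\le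 l_i$ ($j\in[q]$, $s_j\le i\le s_j+p_j-1$). Its optimal value is $\mathsf{Obj}$. Let $\boldsymbol\beta^{(1)},\dots,\boldsymbol\beta^{(T)}$ be the $\boldsymbol\beta$-parts of $T\ge1$ feasible solutions of (MIP$_M$), and $S_t=\{j\in[q]:\beta^{(t)}_i\ne0\text{ for some }i\in\mathcal I_j\}$. The restricted problem (R$_T$) is (MIP$_M$) with the constraints $|\beta_k-\beta_i|\le2Mz^j_{i,k}$ imposed only for $j\in\bigcup_{t\in[T]}S_t$ (all other constraints kept). $S(\boldsymbol\beta)=\{i:\beta_i\ne0\}$ is the support. *)

theory Defs
  imports Main "HOL.Real"
begin

text \<open>Indices are 1-based as in the paper: observations r in {1..n}, columns i in {1..p},
  categorical blocks j in {1..q}; block j is {s j .. s j + pj j - 1}.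
  Vectors are functions nat => real (only values at in-range indices matter).
  The pairwise variables z^j_{i,k} are zz j i k.\<close>

definition block :: "(nat \<Rightarrow> nat) \<Rightarrow> (nat \<Rightarrow> nat) \<Rightarrow> nat \<Rightarrow> nat set" where
  "block s pj j = {s j ..< s j + pj j}"

definition objective ::
  "nat \<Rightarrow> nat \<Rightarrow> (nat \<Rightarrow> real) \<Rightarrow> (nat \<Rightarrow> nat \<Rightarrow> real) \<Rightarrow> real \<Rightarrow> real
   \<Rightarrow> (nat \<Rightarrow> real) \<Rightarrow> real \<Rightarrow> (nat \<Rightarrow> real) \<Rightarrow> (nat \<Rightarrow> real) \<Rightarrow> real" where
  "objective n p y X lam0 lam \<beta> \<alpha> z l =
     (1 / real n) * (\<Sum>r\<in>{1..n}. (y r - (\<Sum>i\<in>{1..p}. X r i * \<beta> i) - \<alpha>)\<^sup>2)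
     + lam0 * (\<Sum>i\<in>{1..p}. z i) + lam * (\<Sum>i\<in>{1..p}. l i)"

text \<open>Feasibility, where the pairwise constraints |beta_k - beta_i| <= 2 M z^j_{i,k}
  are imposed only for blocks j in J (J = {1..q} gives (MIP_M)).\<close>

definition feasible ::
  "nat \<Rightarrow> nat \<Rightarrow> (nat \<Rightarrow> nat) \<Rightarrow> (nat \<Rightarrow> nat) \<Rightarrow> real \<Rightarrow> nat set
   \<Rightarrow> (nat \<Rightarrow> real) \<Rightarrow> real \<Rightarrow> (nat \<Rightarrow> real) \<Rightarrow> (nat \<Rightarrow> real)
   \<Rightarrow> (nat \<Rightarrow> nat \<Rightarrow> nat \<Rightarrow> real) \<Rightarrow> bool" where
  "feasible p q s pj M J \<beta> \<alpha> z l zz \<longleftrightarrow>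
     (\<forall>i\<in>{1..p}. z i \<in> {0, 1} \<and> l i \<in> {0, 1}) \<and>
     (\<forall>j\<in>{1..q}. \<forall>i k. s j \<le> k \<and> k < i \<and> i \<le> s j + pj j - 1 \<longrightarrow> zz j i k \<in> {0, 1}) \<and>
     (\<forall>i\<in>{1..p}. \<bar>\<beta> i\<bar> \<le> M * z i) \<and>
     (\<forall>j\<in>{1..q}. j \<in> J \<longrightarrow> (\<forall>i k. s j \<le> k \<and> k \<le> i - 1 \<and> s j \<le> i \<and> i \<le> s j + pj j - 1
          \<longrightarrow> \<bar>\<beta> k - \<beta> i\<bar> \<le> 2 * M * zz j i k)) \<and>
     (\<forall>j\<in>{1..q}. \<forall>i. s j \<le> i \<and> i \<le> s j + pj j - 1 \<longrightarrow>
          (\<Sum>k\<in>{s j ..< i}. zz j i k) - (real i - real (s j) - 1) \<le> l i)"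

definition active_blocks :: "nat \<Rightarrow> (nat \<Rightarrow> nat) \<Rightarrow> (nat \<Rightarrow> nat) \<Rightarrow> (nat \<Rightarrow> real) \<Rightarrow> nat set" where
  "active_blocks q s pj \<beta> = {j \<in> {1..q}. \<exists>i\<in>block s pj j. \<beta> i \<noteq> 0}"

definition support :: "nat \<Rightarrow> (nat \<Rightarrow> real) \<Rightarrow> nat set" where
  "support p \<beta> = {i \<in> {1..p}. \<beta> i \<noteq> 0}"

definition opt_value ::
  "nat \<Rightarrow> nat \<Rightarrow> (nat \<Rightarrow> real) \<Rightarrow> (nat \<Rightarrow> nat \<Rightarrow> real) \<Rightarrow> real \<Rightarrow> real
   \<Rightarrow> nat \<Rightarrow> (nat \<Rightarrow> nat) \<Rightarrow> (nat \<Rightarrow> nat) \<Rightarrow> real \<Rightarrow> nat set \<Rightarrow> real" where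
  "opt_value n p y X lam0 lam q s pj M J =
     Inf {objective n p y X lam0 lam \<beta> \<alpha> z l | \<beta> \<alpha> z l zz. feasible p q s pj M J \<beta> \<alpha> z l zz}"

definition optimal ::
  "nat \<Rightarrow> nat \<Rightarrow> (nat \<Rightarrow> real) \<Rightarrow> (nat \<Rightarrow> nat \<Rightarrow> real) \<Rightarrow> real \<Rightarrow> real
   \<Rightarrow> nat \<Rightarrow> (nat \<Rightarrow> nat) \<Rightarrow> (nat \<Rightarrow> nat) \<Rightarrow> real \<Rightarrow> nat set
   \<Rightarrow> (nat \<Rightarrow> real) \<Rightarrow> real \<Rightarrow> (nat \<Rightarrow> real) \<Rightarrow> (nat \<Rightarrow> real)
   \<Rightarrow> (nat \<Rightarrow> nat \<Rightarrow> nat \<Rightarrow> real) \<Rightarrow> bool" where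
  "optimal n p y X lam0 lam q s pj M J \<beta> \<alpha> z l zz \<longleftrightarrow>
     feasible p q s pj M J \<beta> \<alpha> z l zz \<and>
     (\<forall>\<beta>' \<alpha>' z' l' zz'. feasible p q s pj M J \<beta>' \<alpha>' z' l' zz' \<longrightarrow>
        objective n p y X lam0 lam \<beta> \<alpha> z l \<le> objective n p y X lam0 lam \<beta>' \<alpha>' z' l')"

end

theory Submission
  imports Defs
begin

lemma feas_mono:
  assumes "feasible p q s pj M J b a z l zz" "J' \<subseteq> J"
  shows "feasible p q s pj M J' b a z l zz"
  using assms unfolding feasible_def by blast

theorem proposition3:
  fixes n p q T :: nat
    and y :: "nat \<Rightarrow> real" and X :: "nat \<Rightarrow> nat \<Rightarrow> real"
    and lam0 lam M :: real
    and s pj :: "nat \<Rightarrow> nat"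
    and \<beta>s :: "nat \<Rightarrow> nat \<Rightarrow> real"
    and \<beta>h :: "nat \<Rightarrow> real" and \<alpha>h :: real and zh lh :: "nat \<Rightarrow> real"
    and zzh :: "nat \<Rightarrow> nat \<Rightarrow> nat \<Rightarrow> real"
  assumes lam_nonneg: "lam \<ge> 0" and lam0_nonneg: "lam0 \<ge> 0" and M_pos: "M > 0"
    and blocks_valid: "\<forall>j\<in>{1..q}. 1 \<le> s j \<and> 1 \<le> pj j \<and> s j + pj j - 1 \<le> p"
    and blocks_disjoint: "\<forall>j\<in>{1..q}. \<forall>j'\<in>{1..q}. j \<noteq> j' \<longrightarrow> block s pj j \<inter> block s pj j' = {}"
    and T_pos: "T \<ge> 1"
    and sols_feasible: "\<forall>t\<in>{1..T}. \<exists>\<alpha> z l zz. feasible p q s pj M {1..q} (\<beta>s t) \<alpha> z l zz"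
    and hat_optimal: "optimal n p y X lam0 lam q s pj M
                        (\<Union>t\<in>{1..T}. active_blocks q s pj (\<beta>s t)) \<beta>h \<alpha>h zh lh zzh"
  shows "objective n p y X lam0 lam \<beta>h \<alpha>h zh lh
           \<le> opt_value n p y X lam0 lam q s pj M {1..q}
         \<and> ((\<exists>t\<in>{1..T}. support p \<beta>h = support p (\<beta>s t))
              \<longrightarrow> optimal n p y X lam0 lam q s pj M {1..q} \<beta>h \<alpha>h zh lh zzh)"
proof -
  let ?J = "\<Union>t\<in>{1..T}. active_blocks q s pj (\<beta>s t)"
  have sub: "?J \<subseteq> {1..q}" unfolding active_blocks_def by auto
  have le: "objective n p y X lam0 lam \<beta>h \<alpha>h zh lh \<le> objective n p y X lam0 lam b a z l"
    if "feasible p q s pj M {1..q} b a z l zz" for b a z l zz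
    using hat_optimal feas_mono[OF that sub] unfolding optimal_def by blast
  have part1: "objective n p y X lam0 lam \<beta>h \<alpha>h zh lh \<le> opt_value n p y X lam0 lam q s pj M {1..q}"
  proof -
    have "1 \<in> {1..T}" using T_pos by simp
    then obtain a z l zz where "feasible p q s pj M {1..q} (\<beta>s 1) a z l zz" using sols_feasible by blast
    then have ne: "{objective n p y X lam0 lam \<beta> \<alpha> z l | \<beta> \<alpha> z l zz. feasible p q s pj M {1..q} \<beta> \<alpha> z l zz} \<noteq> {}" by blast
    show ?thesis unfolding opt_value_def
    proof (rule cInf_greatest[OF ne])
      fix x assume "x \<in> {objective n p y X lam0 lam \<beta> \<alpha> z l | \<beta> \<alpha> z l zz. feasible p q s pj M {1..q} \<beta> \<alpha> z l zz}"
      then obtain b a z l zz where "x = objective n p y X lam0 lam b a z l" "feasible p q s pj M {1..q} b a z l zz" by blast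
      then show "objective n p y X lam0 lam \<beta>h \<alpha>h zh lh \<le> x" using le by simp
    qed
  qed
  have part2: "optimal n p y X lam0 lam q s pj M {1..q} \<beta>h \<alpha>h zh lh zzh"
    if "t \<in> {1..T}" "support p \<beta>h = support p (\<beta>s t)" for t
  proof -
    have fr: "feasible p q s pj M ?J \<beta>h \<alpha>h zh lh zzh" using hat_optimal unfolding optimal_def by blast
    have zero: "\<beta>h i = 0" if "j \<in> {1..q}" "j \<notin> ?J" "i \<in> block s pj j" for j i
    proof -
      have "active_blocks q s pj (\<beta>s t) \<subseteq> ?J" using `t \<in> {1..T}` by (rule UN_upper)
      then have "j \<notin> active_blocks q s pj (\<beta>s t)" using that(2) by blast
      then have "\<beta>s t i = 0" using that unfolding active_blocks_def by blast
      moreover have "i \<in> {1..p}"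
      proof -
        have "1 \<le> s j" "s j + pj j - 1 \<le> p" using that(1) blocks_valid by auto
        moreover have "s j \<le> i" "i < s j + pj j" using that(3) unfolding block_def by auto
        ultimately show ?thesis by simp
      qed
      ultimately show ?thesis using `support p \<beta>h = support p (\<beta>s t)` unfolding support_def by blast
    qed
    have f1: "\<forall>i\<in>{1..p}. zh i \<in> {0, 1} \<and> lh i \<in> {0, 1}"
      using fr unfolding feasible_def by (elim conjE) assumption
    have f2: "\<forall>j\<in>{1..q}. \<forall>i k. s j \<le> k \<and> k < i \<and> i \<le> s j + pj j - 1 \<longrightarrow> zzh j i k \<in> {0, 1}"
      using fr unfolding feasible_def by (elim conjE) assumption
    have f3: "\<forall>i\<in>{1..p}. \<bar>\<beta>h i\<bar> \<le> M * zh i"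
      using fr unfolding feasible_def by (elim conjE) assumption
    have f4: "\<forall>j\<in>{1..q}. j \<in> ?J \<longrightarrow> (\<forall>i k. s j \<le> k \<and> k \<le> i - 1 \<and> s j \<le> i \<and> i \<le> s j + pj j - 1
          \<longrightarrow> \<bar>\<beta>h k - \<beta>h i\<bar> \<le> 2 * M * zzh j i k)"
      using fr unfolding feasible_def by (elim conjE) assumption
    have f5: "\<forall>j\<in>{1..q}. \<forall>i. s j \<le> i \<and> i \<le> s j + pj j - 1 \<longrightarrow>
          (\<Sum>k\<in>{s j ..< i}. zzh j i k) - (real i - real (s j) - 1) \<le> lh i"
      using fr unfolding feasible_def by (elim conjE) assumption
    have f4': "\<forall>j\<in>{1..q}. j \<in> {1..q} \<longrightarrow> (\<forall>i k. s j \<le> k \<and> k \<le> i - 1 \<and> s j \<le> i \<and> i \<le> s j + pj j - 1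
          \<longrightarrow> \<bar>\<beta>h k - \<beta>h i\<bar> \<le> 2 * M * zzh j i k)"
    proof (intro ballI allI impI)
      fix j i k assume j: "j \<in> {1..q}" and c: "s j \<le> k \<and> k \<le> i - 1 \<and> s j \<le> i \<and> i \<le> s j + pj j - 1"
      show "\<bar>\<beta>h k - \<beta>h i\<bar> \<le> 2 * M * zzh j i k"
      proof (cases "j \<in> ?J")
        case True then show ?thesis using f4 j c by blast
      next
        case False
        have sj: "1 \<le> s j" "1 \<le> pj j" using blocks_valid j by auto
        have ki: "k < i" using c sj by linarith
        have "zzh j i k \<in> {0,1}" using f2 j c ki by blast
        hence "zzh j i k \<ge> 0" by auto
        moreover have "k \<in> block s pj j" "i \<in> block s pj j"
          using c ki sj unfolding block_def by auto
        hence "\<beta>h k = 0" "\<beta>h i = 0" using zero[OF j False] by auto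
        ultimately show ?thesis using M_pos by simp
      qed
    qed
    have "feasible p q s pj M {1..q} \<beta>h \<alpha>h zh lh zzh"
      unfolding feasible_def using f1 f2 f3 f4' f5 by (intro conjI)
    then show ?thesis unfolding optimal_def using le by blast
  qed
  show ?thesis using part1 part2 by blast
qed

end
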